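(* Let $G$ be a graph of girth at least $7$ with vertex order $v_1,\ldots,v_n$, let $D$ be a minimal dominating set of $G$, let $u,w\in D$ be adjacent, let $v\in P_D(u)$, and let $X_{uv}$, $D^*$, $Z_{uv}$ be as in the context. Then $X_{uv}=P_D(u)\setminus\{v\}$, and each vertex of $Z_{uv}$ has at most one neighbor in $\bigcup_{x\in X_{uv}\cup\{v\}}P_{D^*}(x)\setminus N[u]$.
   Context: Graphs are finite, simple, undirected; girth is the length of a shortest cycle. $N(x)$ is the open and $N[x]=N(x)\cup\{x\}$ the closed neighborhood, $N[S]=\bigcup_{x\in S}N[x]$. A dominating set is $D\subseteq V(G)$ with $N[D]=V(G)$; minimal if no proper subset is dominating. For a dominating set $D$ and $x\in D$, a vertex $y$ is private for $x$ if $y\in N[x]\setminus N[D\setminus\{x\}]$; $P_D[x]$ is the set of such $y$ and $P_D(x)=P_D[x]\cap N(x)$. Fix an order $v_1,\ldots,v_n$ of $V(G)$. Greedy removal from a dominating set $D'$: while the current set $S$ is not a minimal dominating set, remove from $S$ the vertex $v_i$ of smallest index such that $S\setminus\{v_i\}$ is still dominating. Given $D,u,v$: $X_{uv}$ is built by starting from $\emptyset$ and repeatedly adding the smallest-index vertex of $P_D(u)\setminus N[\{v\}\cup X_{uv}]$ while this set is nonempty. Let $D'=(D\setminus\{u\})\cup X_{uv}\cup\{v\}$, let $D^*$ be the result of greedy removal from $D'$, and $Z_{uv}=D'\setminus D^*$. *)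

theory Defs
  imports Main
begin

text \<open>A finite simple graph is given by a list vs of its vertices (distinct), which
  also fixes the vertex order v_1,...,v_n (the i-th list entry is v_i), and a symmetric,
  irreflexive adjacency relation E on set vs.\<close>

definition simple_graph :: "'a list \<Rightarrow> ('a \<Rightarrow> 'a \<Rightarrow> bool) \<Rightarrow> bool" where
  "simple_graph vs E \<longleftrightarrow> distinct vs \<and> (\<forall>x y. E x y \<longrightarrow> E y x)
     \<and> (\<forall>x. \<not> E x x) \<and> (\<forall>x y. E x y \<longrightarrow> x \<in> set vs \<and> y \<in> set vs)"

definition is_cycle :: "'a list \<Rightarrow> ('a \<Rightarrow> 'a \<Rightarrow> bool) \<Rightarrow> 'a list \<Rightarrow> bool" where
  "is_cycle vs E cs \<longleftrightarrow> length cs \<ge> 3 \<and> distinct cs \<and> set cs \<subseteq> set vs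
     \<and> (\<forall>i < length cs. E (cs ! i) (cs ! ((i + 1) mod length cs)))"

definition girth_at_least :: "'a list \<Rightarrow> ('a \<Rightarrow> 'a \<Rightarrow> bool) \<Rightarrow> nat \<Rightarrow> bool" where
  "girth_at_least vs E g \<longleftrightarrow> (\<forall>cs. is_cycle vs E cs \<longrightarrow> length cs \<ge> g)"

definition open_nbh :: "'a list \<Rightarrow> ('a \<Rightarrow> 'a \<Rightarrow> bool) \<Rightarrow> 'a \<Rightarrow> 'a set" where
  "open_nbh vs E x = {y \<in> set vs. E x y}"

definition closed_nbh :: "'a list \<Rightarrow> ('a \<Rightarrow> 'a \<Rightarrow> bool) \<Rightarrow> 'a \<Rightarrow> 'a set" where
  "closed_nbh vs E x = insert x (open_nbh vs E x)"

definition closed_nbh_set :: "'a list \<Rightarrow> ('a \<Rightarrow> 'a \<Rightarrow> bool) \<Rightarrow> 'a set \<Rightarrow> 'a set" where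
  "closed_nbh_set vs E S = (\<Union>x\<in>S. closed_nbh vs E x)"

definition dominating :: "'a list \<Rightarrow> ('a \<Rightarrow> 'a \<Rightarrow> bool) \<Rightarrow> 'a set \<Rightarrow> bool" where
  "dominating vs E D \<longleftrightarrow> D \<subseteq> set vs \<and> closed_nbh_set vs E D = set vs"

definition minimal_dominating :: "'a list \<Rightarrow> ('a \<Rightarrow> 'a \<Rightarrow> bool) \<Rightarrow> 'a set \<Rightarrow> bool" where
  "minimal_dominating vs E D \<longleftrightarrow> dominating vs E D \<and> (\<forall>D'. D' \<subset> D \<longrightarrow> \<not> dominating vs E D')"

definition priv_closed :: "'a list \<Rightarrow> ('a \<Rightarrow> 'a \<Rightarrow> bool) \<Rightarrow> 'a set \<Rightarrow> 'a \<Rightarrow> 'a set" where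
  "priv_closed vs E D x = closed_nbh vs E x - closed_nbh_set vs E (D - {x})"

definition priv_open :: "'a list \<Rightarrow> ('a \<Rightarrow> 'a \<Rightarrow> bool) \<Rightarrow> 'a set \<Rightarrow> 'a \<Rightarrow> 'a set" where
  "priv_open vs E D x = priv_closed vs E D x \<inter> open_nbh vs E x"

text \<open>The loop is run
  with fuel; since each iteration removes a vertex of S \<subseteq> set vs, fuel length vs suffices
  for the loop to reach its natural termination whenever S \<subseteq> set vs.\<close>
fun greedy_iter :: "'a list \<Rightarrow> ('a \<Rightarrow> 'a \<Rightarrow> bool) \<Rightarrow> nat \<Rightarrow> 'a set \<Rightarrow> 'a set" where
  "greedy_iter vs E 0 S = S"
| "greedy_iter vs E (Suc k) S =
     (if minimal_dominating vs E S then S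
      else (case find (\<lambda>x. x \<in> S \<and> dominating vs E (S - {x})) vs of
              None \<Rightarrow> S
            | Some x \<Rightarrow> greedy_iter vs E k (S - {x})))"

definition greedy_removal :: "'a list \<Rightarrow> ('a \<Rightarrow> 'a \<Rightarrow> bool) \<Rightarrow> 'a set \<Rightarrow> 'a set" where
  "greedy_removal vs E S = greedy_iter vs E (length vs) S"

text \<open>Each step adds a new vertex (it lies outside N[X]),
  so fuel length vs suffices.\<close>
fun X_iter :: "'a list \<Rightarrow> ('a \<Rightarrow> 'a \<Rightarrow> bool) \<Rightarrow> 'a set \<Rightarrow> 'a \<Rightarrow> 'a \<Rightarrow> nat \<Rightarrow> 'a set \<Rightarrow> 'a set" where
  "X_iter vs E D u v 0 X = X"
| "X_iter vs E D u v (Suc k) X =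
     (case find (\<lambda>y. y \<in> priv_open vs E D u - closed_nbh_set vs E ({v} \<union> X)) vs of
        None \<Rightarrow> X
      | Some y \<Rightarrow> X_iter vs E D u v k (insert y X))"

definition X_uv :: "'a list \<Rightarrow> ('a \<Rightarrow> 'a \<Rightarrow> bool) \<Rightarrow> 'a set \<Rightarrow> 'a \<Rightarrow> 'a \<Rightarrow> 'a set" where
  "X_uv vs E D u v = X_iter vs E D u v (length vs) {}"

definition D_prime :: "'a list \<Rightarrow> ('a \<Rightarrow> 'a \<Rightarrow> bool) \<Rightarrow> 'a set \<Rightarrow> 'a \<Rightarrow> 'a \<Rightarrow> 'a set" where
  "D_prime vs E D u v = (D - {u}) \<union> X_uv vs E D u v \<union> {v}"

definition D_star :: "'a list \<Rightarrow> ('a \<Rightarrow> 'a \<Rightarrow> bool) \<Rightarrow> 'a set \<Rightarrow> 'a \<Rightarrow> 'a \<Rightarrow> 'a set" where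
  "D_star vs E D u v = greedy_removal vs E (D_prime vs E D u v)"

definition Z_uv :: "'a list \<Rightarrow> ('a \<Rightarrow> 'a \<Rightarrow> bool) \<Rightarrow> 'a set \<Rightarrow> 'a \<Rightarrow> 'a \<Rightarrow> 'a set" where
  "Z_uv vs E D u v = D_prime vs E D u v - D_star vs E D u v"

end

theory Submission
  imports Defs
begin

lemma cyc3:
  assumes "E a b" "E b c" "E c a" "distinct [a,b,c]" "{a,b,c} \<subseteq> set vs"
  shows "is_cycle vs E [a,b,c]"
  using assms unfolding is_cycle_def by (auto simp: less_Suc_eq)

lemma cyc4:
  assumes "E a b" "E b c" "E c d" "E d a" "distinct [a,b,c,d]" "{a,b,c,d} \<subseteq> set vs"
  shows "is_cycle vs E [a,b,c,d]"
  using assms unfolding is_cycle_def by (auto simp: less_Suc_eq)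

lemma cyc6:
  assumes "E a b" "E b c" "E c d" "E d e" "E e f" "E f a" "distinct [a,b,c,d,e,f]"
    "{a,b,c,d,e,f} \<subseteq> set vs"
  shows "is_cycle vs E [a,b,c,d,e,f]"
  using assms unfolding is_cycle_def by (auto simp: less_Suc_eq)

lemma greedy_dom:
  "dominating vs E S \<Longrightarrow> dominating vs E (greedy_iter vs E k S)"
proof (induction k arbitrary: S)
  case 0 then show ?case by simp
next
  case (Suc k)
  show ?case
  proof (cases "minimal_dominating vs E S")
    case True then show ?thesis by (simp add: minimal_dominating_def)
  next
    case False
    show ?thesis
    proof (cases "find (\<lambda>x. x \<in> S \<and> dominating vs E (S - {x})) vs")
      case None then show ?thesis using False Suc by simp
    next
      case (Some x)
      then have "dominating vs E (S - {x})" by (auto simp: find_Some_iff)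
      then show ?thesis using False Some Suc by simp
    qed
  qed
qed

lemma X_iter_all:
  fixes P :: "'a set"
  assumes P: "P \<subseteq> set vs" and indep: "\<And>a b. a \<in> P \<Longrightarrow> b \<in> P \<Longrightarrow> \<not> E a b"
    and vP: "v \<in> P" and Pdef: "P = priv_open vs E D u"
  shows "X \<subseteq> P - {v} \<Longrightarrow> card (P - {v} - X) \<le> k \<Longrightarrow> X_iter vs E D u v k X = P - {v}"
proof (induction k arbitrary: X)
  have key: "P - closed_nbh_set vs E ({v} \<union> X) = P - {v} - X" if "X \<subseteq> P - {v}" for X
  proof
    show "P - closed_nbh_set vs E ({v} \<union> X) \<subseteq> P - {v} - X"
      using that P unfolding closed_nbh_set_def closed_nbh_def open_nbh_def by auto
    show "P - {v} - X \<subseteq> P - closed_nbh_set vs E ({v} \<union> X)"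
      using that vP indep unfolding closed_nbh_set_def closed_nbh_def open_nbh_def by auto
  qed
  have fin: "finite (P - {v} - X)" for X using P finite_subset by blast
  {
    case 0
    then show ?case using fin[of X] by auto
  next
    case (Suc k)
    note k = key[OF Suc.prems(1)]
    show ?case
    proof (cases "find (\<lambda>y. y \<in> priv_open vs E D u - closed_nbh_set vs E ({v} \<union> X)) vs")
      case None
      have e: "X_iter vs E D u v (Suc k) X = X" using None by simp
      from None have "\<not>(\<exists>y. y \<in> set vs \<and> y \<in> P - closed_nbh_set vs E ({v} \<union> X))"
        unfolding Pdef[symmetric] find_None_iff by auto
      then have "P - {v} - X = {}" using k P by auto
      then show ?thesis using e Suc.prems(1) by auto
    next
      case (Some y)
      have e: "X_iter vs E D u v (Suc k) X = X_iter vs E D u v k (insert y X)" using Some by simp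
      from Some have "y \<in> P - closed_nbh_set vs E ({v} \<union> X)"
        unfolding Pdef[symmetric] find_Some_iff by auto
      then have y: "y \<in> P - {v} - X" using k by auto
      have "P - {v} - insert y X = (P - {v} - X) - {y}" by auto
      then have "card (P - {v} - insert y X) \<le> k"
        using y Suc.prems(2) fin[of X] by (simp add: card_Diff_singleton)
      moreover have "insert y X \<subseteq> P - {v}" using y Suc.prems(1) by auto
      ultimately show ?thesis using e Suc.IH by simp
    qed
  }
qed

theorem lemma10:
  fixes vs :: "'a list" and E :: "'a \<Rightarrow> 'a \<Rightarrow> bool" and D :: "'a set" and u w v :: 'a
  assumes "simple_graph vs E"
    and "girth_at_least vs E 7"
    and "minimal_dominating vs E D"
    and "u \<in> D" and "w \<in> D" and "E u w"
    and "v \<in> priv_open vs E D u"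
  shows "X_uv vs E D u v = priv_open vs E D u - {v}
    \<and> (\<forall>z \<in> Z_uv vs E D u v.
         card (open_nbh vs E z \<inter>
           ((\<Union>x \<in> X_uv vs E D u v \<union> {v}. priv_open vs E (D_star vs E D u v) x)
             - closed_nbh vs E u)) \<le> 1)"
proof -
  note sg = assms(1)[unfolded simple_graph_def]
  have sym: "\<And>x y. E x y \<Longrightarrow> E y x" using sg by blast
  have irr: "\<And>x. \<not> E x x" using sg by blast
  have inv: "\<And>x y. E x y \<Longrightarrow> x \<in> set vs" "\<And>x y. E x y \<Longrightarrow> y \<in> set vs"
    using sg by blast+
  have dist: "distinct vs" using sg by blast
  have girth: "\<And>cs. is_cycle vs E cs \<Longrightarrow> length cs \<ge> 7"
    using assms(2) unfolding girth_at_least_def by blast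
  define P where "P = priv_open vs E D u"
  have Pn: "P \<subseteq> open_nbh vs E u" unfolding P_def priv_open_def by auto
  have Pu: "\<And>x. x \<in> P \<Longrightarrow> E u x" using Pn unfolding open_nbh_def by auto
  have Pvs: "P \<subseteq> set vs" using Pn unfolding open_nbh_def by auto
  have vP: "v \<in> P" using assms(7) P_def by simp
  have indep: "\<And>a b. a \<in> P \<Longrightarrow> b \<in> P \<Longrightarrow> \<not> E a b"
  proof
    fix a b assume a: "a \<in> P" and b: "b \<in> P" and ab: "E a b"
    have "is_cycle vs E [u,a,b]"
      apply (rule cyc3)
      using Pu[OF a] Pu[OF b] ab sym[OF Pu[OF b]] irr[of u] irr[of a] inv[OF Pu[OF a]] inv[OF ab] by (auto)
    from girth[OF this] show False by simp
  qed
  have card: "card (P - {v} - {}) \<le> length vs"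
  proof -
    have "card (P - {v} - {}) \<le> card (set vs)" using Pvs by (intro card_mono) auto
    then show ?thesis using distinct_card[OF dist] by simp
  qed
  have X: "X_uv vs E D u v = P - {v}"
    unfolding X_uv_def using X_iter_all[OF Pvs indep vP P_def, of "{}"] card by simp
  have XP: "X_uv vs E D u v \<union> {v} = P" using X vP by auto
  have domD: "dominating vs E D" using assms(3) unfolding minimal_dominating_def by blast
  have Dvs: "D \<subseteq> set vs" using domD unfolding dominating_def by blast
  have uP: "u \<notin> P" using Pu irr by blast
  have D'eq: "D_prime vs E D u v = (D - {u}) \<union> P" unfolding D_prime_def using XP by auto
  have domD': "dominating vs E (D_prime vs E D u v)"
    unfolding dominating_def
  proof
    show "D_prime vs E D u v \<subseteq> set vs" using D'eq Dvs Pvs by auto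
    show "closed_nbh_set vs E (D_prime vs E D u v) = set vs"
    proof
      show "closed_nbh_set vs E (D_prime vs E D u v) \<subseteq> set vs"
        using D'eq Dvs Pvs unfolding closed_nbh_set_def closed_nbh_def open_nbh_def by auto
      show "set vs \<subseteq> closed_nbh_set vs E (D_prime vs E D u v)"
      proof
        fix y assume y: "y \<in> set vs"
        then have "y \<in> closed_nbh_set vs E D" using domD unfolding dominating_def by blast
        then obtain d where d: "d \<in> D" "y \<in> closed_nbh vs E d" unfolding closed_nbh_set_def by auto
        show "y \<in> closed_nbh_set vs E (D_prime vs E D u v)"
        proof (cases "d = u")
          case False then show ?thesis using d D'eq unfolding closed_nbh_set_def by auto
        next
          case True
          show ?thesis
          proof (cases "y \<in> closed_nbh_set vs E (D - {u})")
            case True then show ?thesis using D'eq unfolding closed_nbh_set_def by auto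
          next
            case nd: False
            show ?thesis
            proof (cases "y = u")
              case True
              have "E v u" using Pu[OF vP] sym by blast
              then have "y \<in> closed_nbh vs E v" using True y unfolding closed_nbh_def open_nbh_def by auto
              then show ?thesis using vP D'eq unfolding closed_nbh_set_def by auto
            next
              case False
              then have "y \<in> P" using nd d True y
                unfolding P_def priv_open_def priv_closed_def closed_nbh_def by auto
              then show ?thesis using D'eq y unfolding closed_nbh_set_def closed_nbh_def by auto
            qed
          qed
        qed
      qed
    qed
  qed
  define Ds where "Ds = D_star vs E D u v"
  have domDs: "dominating vs E Ds"
    unfolding Ds_def D_star_def greedy_removal_def using greedy_dom domD' by blast
  have part2: "card (open_nbh vs E z \<inter>
           ((\<Union>x \<in> P. priv_open vs E Ds x) - closed_nbh vs E u)) \<le> 1"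
    if z: "z \<in> Z_uv vs E D u v" for z
  proof -
    have zD': "z \<in> (D - {u}) \<union> P" and zDs: "z \<notin> Ds"
      using z D'eq unfolding Z_uv_def Ds_def by auto
    have uz: "u \<noteq> z" using zD' uP by auto
    let ?S = "open_nbh vs E z \<inter> ((\<Union>x \<in> P. priv_open vs E Ds x) - closed_nbh vs E u)"
    have fin: "finite ?S" unfolding open_nbh_def by auto
    have "\<forall>a\<in>?S. \<forall>b\<in>?S. a = b"
    proof (intro ballI, rule ccontr)
      fix y1 y2 assume y1: "y1 \<in> ?S" and y2: "y2 \<in> ?S" and ne: "y1 \<noteq> y2"
      have facts: "\<exists>x\<in>P. E z y \<and> E x y \<and> y \<in> set vs \<and> x \<in> Ds \<and> y \<noteq> u \<and> \<not> E u y"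
        if y: "y \<in> ?S" for y
      proof -
        obtain x where x: "x \<in> P" "y \<in> priv_open vs E Ds x" using y by auto
        have ey: "E z y" "y \<in> set vs" "y \<notin> closed_nbh vs E u" using y unfolding open_nbh_def by auto
        have exy: "E x y" "y \<notin> closed_nbh_set vs E (Ds - {x})"
          using x(2) unfolding priv_open_def priv_closed_def open_nbh_def by auto
        have "x \<in> Ds"
        proof (rule ccontr)
          assume "x \<notin> Ds"
          then have "Ds - {x} = Ds" by auto
          then show False using exy(2) ey(2) domDs unfolding dominating_def by auto
        qed
        then show ?thesis using x ey exy unfolding closed_nbh_def open_nbh_def by auto
      qed
      obtain x1 where a: "x1 \<in> P" "E z y1" "E x1 y1" "y1 \<in> set vs" "x1 \<in> Ds" "y1 \<noteq> u" "\<not> E u y1"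
        using facts[OF y1] by blast
      obtain x2 where b: "x2 \<in> P" "E z y2" "E x2 y2" "y2 \<in> set vs" "x2 \<in> Ds" "y2 \<noteq> u" "\<not> E u y2"
        using facts[OF y2] by blast
      have ux1: "E u x1" "E u x2" using a b Pu by auto
      have zx: "z \<noteq> x1" "z \<noteq> x2" using a b zDs by auto
      show False
      proof (cases "x1 = x2")
        case True
        have "is_cycle vs E [z,y1,x1,y2]"
          apply (rule cyc4)
          using a b True zx ne sym[OF a(3)] sym[OF b(2)] irr[of z] irr[of x1] inv[OF a(3)] inv[OF a(2)] by auto
        from girth[OF this] show False by simp
      next
        case False
        have "is_cycle vs E [u,x1,y1,z,y2,x2]"
          apply (rule cyc6)
          using a b False zx ne ux1 uz sym[OF a(2)] sym[OF b(3)] sym[OF ux1(2)] irr[of z] irr[of x1] irr[of x2] irr[of u] inv[OF ux1(1)] inv[OF ux1(2)] inv[OF a(2)] by auto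
        from girth[OF this] show False by simp
      qed
    qed
    then show ?thesis using fin by (simp add: card_le_Suc0_iff_eq)
  qed
  show ?thesis using X XP part2 P_def Ds_def by simp
qed

end
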